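(* Let $\mu,\nu$ be partitions with $|\mu|+|\nu|=k$ that form the cycle-path type of some partial permutation. There is a polynomial $P_{(\mu,\nu)}\in\mathbb{Z}[n,m_1,\dots,m_k]$ of degree $k$ with respect to the grading $\deg n=1$, $\deg m_i=i$, such that for every $n$ and every $\lambda\vdash n$, $c_{(\mu,\nu)}(\lambda)=P_{(\mu,\nu)}(n,m_1(\lambda),\dots,m_k(\lambda))$.
   Context: A partial permutation $(I,J)$, $I=(i_1,\dots,i_k)$, $J=(j_1,\dots,j_k)$, is packed if its set of entries $I\cup J$ equals $[m]$ for some $m$. Its graph $G(I,J)$ has vertices $I\cup J$ and edges $i_\ell\to j_\ell$; the cycle-path type $(\mu,\nu)$ consists of the partition of cycle lengths and the partition of path lengths (length = number of edges). For $\lambda\vdash n$, fix $\pi\in\mathfrak{S}_n$ of cycle type $\lambda$; a function $\psi:[m]\to[n]$ (not necessarily injective) is compatible with $(I,J)$ relative to $\pi$ if $\pi(\psi(i_\ell))=\psi(j_\ell)$ for all $\ell\in[k]$. For a packed $(I,J)$ of cycle-path type $(\mu,\nu)$, $c_{(\mu,\nu)}(\lambda)$ denotes the number of such compatible functions; it depends only on $(\mu,\nu)$ and $\lambda$. $m_i(\lambda)$ is the number of parts of $\lambda$ equal to $i$. *)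

theory Defs
  imports "HOL-Library.Multiset" "HOL-Library.FuncSet" "HOL-Combinatorics.Permutations"
begin

definition is_partition_of :: "nat multiset \<Rightarrow> nat \<Rightarrow> bool" where
  "is_partition_of lam n \<longleftrightarrow> (\<forall>x\<in>#lam. 0 < x) \<and> sum_mset lam = n"

definition is_partition :: "nat multiset \<Rightarrow> bool" where
  "is_partition lam \<longleftrightarrow> (\<forall>x\<in>#lam. 0 < x)"

definition perm_orbit :: "(nat \<Rightarrow> nat) \<Rightarrow> nat \<Rightarrow> nat set" where
  "perm_orbit p x = {(p ^^ j) x | j. True}"

definition cycle_type :: "(nat \<Rightarrow> nat) \<Rightarrow> nat set \<Rightarrow> nat multiset" where
  "cycle_type p A = image_mset card (mset_set (perm_orbit p ` A))"

definition partial_perm :: "nat list \<Rightarrow> nat list \<Rightarrow> bool" where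
  "partial_perm I J \<longleftrightarrow> length I = length J \<and> distinct I \<and> distinct J
     \<and> (\<forall>x \<in> set I \<union> set J. 0 < x)"

definition packed :: "nat list \<Rightarrow> nat list \<Rightarrow> nat \<Rightarrow> bool" where
  "packed I J m \<longleftrightarrow> partial_perm I J \<and> set I \<union> set J = {1..m}"

definition pp_edges :: "nat list \<Rightarrow> nat list \<Rightarrow> (nat \<times> nat) set" where
  "pp_edges I J = set (zip I J)"

definition pp_components :: "nat list \<Rightarrow> nat list \<Rightarrow> nat set set" where
  "pp_components I J =
     (\<lambda>v. ((pp_edges I J \<union> (pp_edges I J)\<inverse>)\<^sup>*) `` {v}) ` (set I \<union> set J)"

definition comp_edges :: "nat list \<Rightarrow> nat list \<Rightarrow> nat set \<Rightarrow> nat" where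
  "comp_edges I J C = card {l. l < length I \<and> I ! l \<in> C}"

text \<open>A component is a cycle iff every vertex has an outgoing edge; otherwise it is a path.\<close>
definition is_cycle_comp :: "nat list \<Rightarrow> nat list \<Rightarrow> nat set \<Rightarrow> bool" where
  "is_cycle_comp I J C \<longleftrightarrow> C \<subseteq> set I"

definition cycle_part :: "nat list \<Rightarrow> nat list \<Rightarrow> nat multiset" where
  "cycle_part I J = image_mset (comp_edges I J)
      (mset_set {C \<in> pp_components I J. is_cycle_comp I J C})"

definition path_part :: "nat list \<Rightarrow> nat list \<Rightarrow> nat multiset" where
  "path_part I J = image_mset (comp_edges I J)
      (mset_set {C \<in> pp_components I J. \<not> is_cycle_comp I J C})"

definition num_compatible :: "nat list \<Rightarrow> nat list \<Rightarrow> nat \<Rightarrow> (nat \<Rightarrow> nat) \<Rightarrow> nat \<Rightarrow> nat" where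
  "num_compatible I J m p n = card {\<psi> \<in> {1..m} \<rightarrow>\<^sub>E {1..n}.
      \<forall>l < length I. p (\<psi> (I ! l)) = \<psi> (J ! l)}"

text \<open>Polynomials in Z[n, m_1, ..., m_k], given by coefficient functions on exponent vectors
  e (e 0 = exponent of n, e i = exponent of m_i for 1 \<le> i \<le> k, e i = 0 for i > k).\<close>
definition wdeg :: "nat \<Rightarrow> (nat \<Rightarrow> nat) \<Rightarrow> nat" where
  "wdeg k e = e 0 + (\<Sum>i=1..k. i * e i)"

definition is_poly_nm :: "nat \<Rightarrow> ((nat \<Rightarrow> nat) \<Rightarrow> int) \<Rightarrow> bool" where
  "is_poly_nm k P \<longleftrightarrow> finite {e. P e \<noteq> 0} \<and> (\<forall>e. P e \<noteq> 0 \<longrightarrow> (\<forall>i>k. e i = 0))"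

definition eval_poly_nm :: "nat \<Rightarrow> ((nat \<Rightarrow> nat) \<Rightarrow> int) \<Rightarrow> nat \<Rightarrow> (nat \<Rightarrow> nat) \<Rightarrow> int" where
  "eval_poly_nm k P n ms = (\<Sum>e \<in> {e. P e \<noteq> 0}.
      P e * int n ^ e 0 * (\<Prod>i=1..k. int (ms i) ^ e i))"

end

theory Submission
  imports Defs
begin


definition mon :: "nat \<Rightarrow> (nat \<Rightarrow> nat) \<Rightarrow> nat \<Rightarrow> (nat \<Rightarrow> nat) \<Rightarrow> int" where
  "mon k e n ms = int n ^ e 0 * (\<Prod>i=1..k. int (ms i) ^ e i)"

definition polyF :: "nat \<Rightarrow> nat \<Rightarrow> (nat \<Rightarrow> (nat \<Rightarrow> nat) \<Rightarrow> int) \<Rightarrow> bool" where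
  "polyF k D F \<longleftrightarrow> (\<exists>P. is_poly_nm k P \<and> (\<forall>e. P e \<noteq> 0 \<longrightarrow> wdeg k e \<le> D) \<and>
      (\<forall>n ms. F n ms = eval_poly_nm k P n ms))"

lemma eval_as_sum: "eval_poly_nm k P n ms = (\<Sum>e\<in>{e. P e \<noteq> 0}. P e * mon k e n ms)"
  unfolding eval_poly_nm_def mon_def by (simp add: mult.assoc)

lemma mono_repr:
  fixes S :: "'a set" and c :: "'a \<Rightarrow> int" and ex :: "'a \<Rightarrow> nat \<Rightarrow> nat"
  assumes fin: "finite S" and van: "\<And>s i. s \<in> S \<Longrightarrow> i > k \<Longrightarrow> ex s i = 0"
    and deg: "\<And>s. s \<in> S \<Longrightarrow> wdeg k (ex s) \<le> D"
    and F: "\<And>n ms. F n ms = (\<Sum>s\<in>S. c s * mon k (ex s) n ms)"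
  shows "polyF k D F"
proof -
  define P where "P e = (\<Sum>s\<in>{s\<in>S. ex s = e}. c s)" for e
  have sub: "{e. P e \<noteq> 0} \<subseteq> ex ` S"
  proof
    fix e assume "e \<in> {e. P e \<noteq> 0}"
    then have "P e \<noteq> 0" by simp
    then have "{s\<in>S. ex s = e} \<noteq> {}" unfolding P_def by (intro notI) simp
    then show "e \<in> ex ` S" by auto
  qed
  have fe: "finite {e. P e \<noteq> 0}" using sub fin finite_subset by blast
  have ip: "is_poly_nm k P" unfolding is_poly_nm_def
  proof (intro conjI fe allI impI)
    fix e i assume "P e \<noteq> 0" "k < i"
    then obtain s where "s \<in> S" "ex s = e" using sub by auto
    then show "e i = 0" using van \<open>k < i\<close> by auto
  qed
  have dg: "\<forall>e. P e \<noteq> 0 \<longrightarrow> wdeg k e \<le> D" using sub deg by auto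
  have ev: "F n ms = eval_poly_nm k P n ms" for n ms
  proof -
    have "eval_poly_nm k P n ms = (\<Sum>e\<in>ex ` S. P e * mon k e n ms)"
      unfolding eval_as_sum
      by (rule sum.mono_neutral_left) (use fin sub in auto)
    also have "\<dots> = (\<Sum>e\<in>ex ` S. (\<Sum>s\<in>{s\<in>S. ex s = e}. c s * mon k (ex s) n ms))"
      unfolding P_def sum_distrib_right by (intro sum.cong refl) auto
    also have "\<dots> = (\<Sum>s\<in>S. c s * mon k (ex s) n ms)"
      using sum.image_gen[OF fin, of "\<lambda>s. c s * mon k (ex s) n ms" ex] by simp
    finally show ?thesis using F by simp
  qed
  show ?thesis unfolding polyF_def using ip dg ev by blast
qed

lemma polyF_E:
  assumes "polyF k D F"
  obtains P where "finite {e. P e \<noteq> 0}" "\<And>e i. P e \<noteq> 0 \<Longrightarrow> i > k \<Longrightarrow> e i = 0"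
    "\<And>e. P e \<noteq> 0 \<Longrightarrow> wdeg k e \<le> D"
    "\<And>n ms. F n ms = (\<Sum>e\<in>{e. P e \<noteq> 0}. P e * mon k e n ms)"
  using assms unfolding polyF_def is_poly_nm_def eval_as_sum by blast

lemma mon_add: "mon k (\<lambda>i. a i + b i) n ms = mon k a n ms * mon k b n ms"
  unfolding mon_def by (simp add: power_add prod.distrib)

lemma wdeg_add: "wdeg k (\<lambda>i. a i + b i) = wdeg k a + wdeg k b"
  unfolding wdeg_def by (simp add: algebra_simps sum.distrib)

lemma polyF_mult:
  assumes "polyF k D1 F" "polyF k D2 G"
  shows "polyF k (D1 + D2) (\<lambda>n ms. F n ms * G n ms)"
proof -
  obtain P where P: "finite {e. P e \<noteq> 0}" "\<And>e i. P e \<noteq> 0 \<Longrightarrow> i > k \<Longrightarrow> e i = 0"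
    "\<And>e. P e \<noteq> 0 \<Longrightarrow> wdeg k e \<le> D1"
    "\<And>n ms. F n ms = (\<Sum>e\<in>{e. P e \<noteq> 0}. P e * mon k e n ms)" using polyF_E[OF assms(1)] by blast
  obtain Q where Q: "finite {e. Q e \<noteq> 0}" "\<And>e i. Q e \<noteq> 0 \<Longrightarrow> i > k \<Longrightarrow> e i = 0"
    "\<And>e. Q e \<noteq> 0 \<Longrightarrow> wdeg k e \<le> D2"
    "\<And>n ms. G n ms = (\<Sum>e\<in>{e. Q e \<noteq> 0}. Q e * mon k e n ms)" using polyF_E[OF assms(2)] by blast
  show ?thesis
  proof (rule mono_repr[where S="{e. P e \<noteq> 0} \<times> {e. Q e \<noteq> 0}" and c="\<lambda>(a,b). P a * Q b"
        and ex="\<lambda>(a,b) i. a i + b i"])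
    show "finite ({e. P e \<noteq> 0} \<times> {e. Q e \<noteq> 0})" using P(1) Q(1) by blast
    show "\<And>s i. s \<in> {e. P e \<noteq> 0} \<times> {e. Q e \<noteq> 0} \<Longrightarrow> k < i \<Longrightarrow> (case s of (a, b) \<Rightarrow> \<lambda>i. a i + b i) i = 0"
      using P(2) Q(2) by auto
    show "\<And>s. s \<in> {e. P e \<noteq> 0} \<times> {e. Q e \<noteq> 0} \<Longrightarrow> wdeg k (case s of (a, b) \<Rightarrow> \<lambda>i. a i + b i) \<le> D1 + D2"
      using P(3) Q(3) by (auto simp: wdeg_add add_mono)
    fix n ms
    show "F n ms * G n ms = (\<Sum>s\<in>{e. P e \<noteq> 0} \<times> {e. Q e \<noteq> 0}.
            (case s of (a, b) \<Rightarrow> P a * Q b) * mon k (case s of (a, b) \<Rightarrow> \<lambda>i. a i + b i) n ms)"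
      unfolding P(4) Q(4) sum_product sum.cartesian_product
      by (intro sum.cong refl) (auto simp: mon_add)
  qed
qed

lemma polyF_add:
  assumes "polyF k D F" "polyF k D G"
  shows "polyF k D (\<lambda>n ms. F n ms + G n ms)"
proof -
  obtain P where P: "finite {e. P e \<noteq> 0}" "\<And>e i. P e \<noteq> 0 \<Longrightarrow> i > k \<Longrightarrow> e i = 0"
    "\<And>e. P e \<noteq> 0 \<Longrightarrow> wdeg k e \<le> D"
    "\<And>n ms. F n ms = (\<Sum>e\<in>{e. P e \<noteq> 0}. P e * mon k e n ms)" using polyF_E[OF assms(1)] by blast
  obtain Q where Q: "finite {e. Q e \<noteq> 0}" "\<And>e i. Q e \<noteq> 0 \<Longrightarrow> i > k \<Longrightarrow> e i = 0"
    "\<And>e. Q e \<noteq> 0 \<Longrightarrow> wdeg k e \<le> D"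
    "\<And>n ms. G n ms = (\<Sum>e\<in>{e. Q e \<noteq> 0}. Q e * mon k e n ms)" using polyF_E[OF assms(2)] by blast
  show ?thesis
  proof (rule mono_repr[where S="{e. P e \<noteq> 0} <+> {e. Q e \<noteq> 0}" and c="case_sum P Q"
        and ex="case_sum id id"])
    show "finite ({e. P e \<noteq> 0} <+> {e. Q e \<noteq> 0})" using P(1) Q(1) by (simp add: finite_Plus_iff)
    show "\<And>s i. s \<in> {e. P e \<noteq> 0} <+> {e. Q e \<noteq> 0} \<Longrightarrow> k < i \<Longrightarrow> case_sum id id s i = 0"
      using P(2) Q(2) by auto
    show "\<And>s. s \<in> {e. P e \<noteq> 0} <+> {e. Q e \<noteq> 0} \<Longrightarrow> wdeg k (case_sum id id s) \<le> D"
      using P(3) Q(3) by auto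
    fix n ms
    show "F n ms + G n ms = (\<Sum>s\<in>{e. P e \<noteq> 0} <+> {e. Q e \<noteq> 0}. case_sum P Q s * mon k (case_sum id id s) n ms)"
      unfolding P(4) Q(4) using P(1) Q(1) by (simp add: sum.Plus o_def)
  qed
qed

lemma polyF_mono: "polyF k D F \<Longrightarrow> D \<le> D' \<Longrightarrow> polyF k D' F"
  unfolding polyF_def by (meson le_trans)

lemma polyF_const: "polyF k 0 (\<lambda>n ms. c)"
  by (rule mono_repr[where S="{()}" and c="\<lambda>_. c" and ex="\<lambda>_ _. 0"]) (auto simp: wdeg_def mon_def)

lemma polyF_n: "polyF k 1 (\<lambda>n ms. int n)"
  by (rule mono_repr[where S="{()}" and c="\<lambda>_. 1" and ex="\<lambda>_ i. if i = 0 then 1 else 0"])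
     (auto simp: wdeg_def mon_def)

lemma polyF_m:
  assumes "1 \<le> d" "d \<le> k"
  shows "polyF k d (\<lambda>n ms. int (ms d))"
proof (rule mono_repr[where S="{()}" and c="\<lambda>_. 1" and ex="\<lambda>_ i. if i = d then 1 else 0"])
  have "(\<Sum>i = 1..k. i * (if i = d then 1 else 0)) = (\<Sum>i \<in> {d}. i)"
    by (rule sum.mono_neutral_cong_right) (use assms in auto)
  then show "\<And>s. s \<in> {()} \<Longrightarrow> wdeg k (\<lambda>i. if i = d then 1 else 0) \<le> d"
    using assms by (simp add: wdeg_def)
  fix n ms
  have "(\<Prod>i = 1..k. int (ms i) ^ (if i = d then 1 else 0)) = (\<Prod>i \<in> {d}. int (ms i))"
    by (rule prod.mono_neutral_cong_right) (use assms in auto)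
  then show "int (ms d) = (\<Sum>s\<in>{()}. 1 * mon k (\<lambda>i. if i = d then 1 else 0) n ms)"
    using assms by (simp add: mon_def)
qed (use assms in auto)

lemma polyF_sum:
  assumes "finite A" "\<And>a. a \<in> A \<Longrightarrow> polyF k D (F a)"
  shows "polyF k D (\<lambda>n ms. \<Sum>a\<in>A. F a n ms)"
  using assms
proof (induction A rule: finite_induct)
  case empty then show ?case using polyF_mono[OF polyF_const[of k 0]] by simp
next
  case (insert x A)
  then show ?case using polyF_add[of k D "F x" "\<lambda>n ms. \<Sum>a\<in>A. F a n ms"] by simp
qed

lemma polyF_cong: "polyF k D F \<Longrightarrow> (\<And>n ms. F n ms = G n ms) \<Longrightarrow> polyF k D G"
  unfolding polyF_def by simp




lemma funpow_apply_add: "(g^^a) ((g^^b) x) = (g^^(a+b)) x"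
  by (simp add: funpow_add)

lemma period_dvd:
  assumes "(g^^L) x = x" "0 < L" "\<And>j. 0 < j \<Longrightarrow> j < L \<Longrightarrow> (g^^j) x \<noteq> x"
  shows "(g^^t) x = x \<longleftrightarrow> L dvd t"
proof -
  have e: "(g^^(t mod L)) x = (g^^t) x" by (rule funpow_mod_eq[OF assms(1)])
  have lt: "t mod L < L" using assms(2) by (rule mod_less_divisor)
  show ?thesis
  proof
    assume h: "(g^^t) x = x"
    show "L dvd t"
    proof (rule ccontr)
      assume "\<not> L dvd t"
      then have "0 < t mod L" by (simp add: dvd_eq_mod_eq_0)
      then have "(g^^(t mod L)) x \<noteq> x" using assms(3) lt by simp
      with e h show False by simp
    qed
  next
    assume "L dvd t"
    then have "t mod L = 0" by (simp add: dvd_eq_mod_eq_0)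
    with e show "(g^^t) x = x" by simp
  qed
qed

lemma period_inj_aux:
  assumes "(g^^L) x = x" "\<And>j. 0 < j \<Longrightarrow> j < L \<Longrightarrow> (g^^j) x \<noteq> x"
    and ab: "a < b" "b < L" "(g^^a) x = (g^^b) x"
  shows False
proof -
  have "(g^^(L - b + a)) x = (g^^(L - b)) ((g^^a) x)" by (simp only: funpow_apply_add)
  also have "\<dots> = (g^^(L - b)) ((g^^b) x)" by (simp only: ab(3))
  also have "\<dots> = (g^^(L - b + b)) x" by (simp only: funpow_apply_add)
  finally have e: "(g^^(L - b + a)) x = (g^^(L - b + b)) x" .
  have "L - b + b = L" using ab by linarith
  with e have xe: "(g^^(L - b + a)) x = x" using assms(1) by simp
  have lt1: "0 < L - b + a" and lt2: "L - b + a < L" using ab by linarith+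
  show False using assms(2)[OF lt1 lt2] xe by contradiction
qed

lemma period_inj:
  assumes "(g^^L) x = x" "0 < L" "\<And>j. 0 < j \<Longrightarrow> j < L \<Longrightarrow> (g^^j) x \<noteq> x"
  shows "inj_on (\<lambda>j. (g^^j) x) {..<L}"
proof (rule inj_onI)
  fix a b assume ab: "a \<in> {..<L}" "b \<in> {..<L}" "(g^^a) x = (g^^b) x"
  show "a = b"
  proof (rule ccontr)
    assume "a \<noteq> b"
    then consider "a < b" | "b < a" by linarith
    then show False
    proof cases
      case 1 then show False using period_inj_aux[OF assms(1) assms(3), of a b] ab by auto
    next
      case 2 then show False using period_inj_aux[OF assms(1) assms(3), of b a] ab by auto
    qed
  qed
qed

lemma period_range:
  assumes "(g^^L) x = x" "0 < L"
  shows "{(g^^j) x | j. True} = (\<lambda>j. (g^^j) x) ` {..<L}"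
proof -
  have hm: "(g^^j) x = (g^^(j mod L)) x" for j using funpow_mod_eq[where f=g and n=L and m=j and x=x] assms(1) by simp
  show ?thesis
  proof
    show "{(g ^^ j) x |j. True} \<subseteq> (\<lambda>j. (g ^^ j) x) ` {..<L}"
    proof
      fix z assume "z \<in> {(g ^^ j) x |j. True}"
      then obtain j where "z = (g^^j) x" by auto
      then have "z = (g^^(j mod L)) x" using hm by simp
      moreover have "j mod L \<in> {..<L}" using assms(2) by simp
      ultimately show "z \<in> (\<lambda>j. (g ^^ j) x) ` {..<L}" by blast
    qed
  qed auto
qed

definition per :: "(nat \<Rightarrow> nat) \<Rightarrow> nat \<Rightarrow> nat" where
  "per g x = (LEAST L. 0 < L \<and> (g^^L) x = x)"

lemma per_props:
  assumes "0 < N" "(g^^N) x = x"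
  shows "0 < per g x" "(g^^(per g x)) x = x" "\<And>j. 0 < j \<Longrightarrow> j < per g x \<Longrightarrow> (g^^j) x \<noteq> x"
proof -
  have ex: "0 < N \<and> (g^^N) x = x" using assms by simp
  show "0 < per g x" "(g^^(per g x)) x = x" unfolding per_def using LeastI[where P="\<lambda>L. 0 < L \<and> (g^^L) x = x", OF ex] by auto
  fix j assume "0 < j" "j < per g x"
  then show "(g^^j) x \<noteq> x" unfolding per_def using not_less_Least by blast
qed

lemma permutes_funpow_in: "p permutes S \<Longrightarrow> x \<in> S \<Longrightarrow> (p^^j) x \<in> S"
  by (induction j) (auto simp: permutes_in_image)

context
  fixes p :: "nat \<Rightarrow> nat" and S :: "nat set"
  assumes pS: "p permutes S" and fS: "finite S"
begin

lemma ex_period: obtains N where "0 < N" "(p^^N) x = x"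
  using permutation_self[of p x] pS fS permutation_permutes by blast

lemma per_p: "0 < per p x" "(p^^(per p x)) x = x" "\<And>j. 0 < j \<Longrightarrow> j < per p x \<Longrightarrow> (p^^j) x \<noteq> x"
  using per_props ex_period by metis+

lemma fix_iff: "(p^^t) x = x \<longleftrightarrow> per p x dvd t"
  using period_dvd[OF per_p(2) per_p(1) per_p(3)] by blast

lemma orbit_img: "perm_orbit p x = (\<lambda>j. (p^^j) x) ` {..<per p x}"
  unfolding perm_orbit_def using period_range[OF per_p(2) per_p(1)] by simp

lemma card_orbit: "card (perm_orbit p x) = per p x"
  unfolding orbit_img using period_inj[OF per_p(2) per_p(1) per_p(3)] by (simp add: card_image)

lemma orbit_sub: "x \<in> S \<Longrightarrow> perm_orbit p x \<subseteq> S"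
  unfolding perm_orbit_def using permutes_funpow_in[OF pS] by auto

lemma self_orbit: "x \<in> perm_orbit p x"
  unfolding perm_orbit_def by (auto intro: exI[of _ 0])

lemma orbit_same: assumes "y \<in> perm_orbit p x" shows "perm_orbit p y = perm_orbit p x"
proof -
  obtain a where a: "y = (p^^a) x" using assms unfolding perm_orbit_def by auto
  have L: "(p^^(per p x * c)) x = x" for c using fix_iff by simp
  show ?thesis
  proof
    show "perm_orbit p y \<subseteq> perm_orbit p x"
    proof
      fix z assume "z \<in> perm_orbit p y"
      then obtain j where "z = (p^^j) y" unfolding perm_orbit_def by auto
      then have "z = (p^^(j+a)) x" unfolding a by (simp only: funpow_apply_add)
      then show "z \<in> perm_orbit p x" unfolding perm_orbit_def by blast
    qed
    show "perm_orbit p x \<subseteq> perm_orbit p y"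
    proof
      fix z assume "z \<in> perm_orbit p x"
      then obtain j where j: "z = (p^^j) x" unfolding perm_orbit_def by auto
      have "a \<le> per p x * a" using per_p(1)[of x] by (cases "per p x") auto
      then have ge: "a \<le> j + per p x * a" by linarith
      have "(p^^(j + per p x * a - a)) y = (p^^(j + per p x * a)) x"
        unfolding a using ge by (simp add: funpow_apply_add)
      also have "\<dots> = (p^^j) ((p^^(per p x * a)) x)" by (simp add: funpow_add)
      also have "\<dots> = z" using L j by simp
      finally show "z \<in> perm_orbit p y" unfolding perm_orbit_def by auto
    qed
  qed
qed

lemma per_orbit: "y \<in> perm_orbit p x \<Longrightarrow> per p y = per p x"
  using card_orbit[of y] card_orbit[of x] orbit_same[of y x] by simp

lemma fix_count:
  assumes "0 < L"
  shows "card {x\<in>S. (p^^L) x = x} = (\<Sum>d\<in>{d. d dvd L}. d * card {Ob \<in> perm_orbit p ` S. card Ob = d})"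
proof -
  define Orbs where "Orbs = perm_orbit p ` S"
  define A where "A = {Ob\<in>Orbs. card Ob dvd L}"
  have fO: "finite Orbs" unfolding Orbs_def using fS by simp
  have fA: "finite A" unfolding A_def using fO by simp
  have setA: "{x\<in>S. (p^^L) x = x} = \<Union>A"
  proof
    show "{x \<in> S. (p ^^ L) x = x} \<subseteq> \<Union> A"
    proof
      fix x assume "x \<in> {x \<in> S. (p ^^ L) x = x}"
      then have x: "x \<in> S" "(p ^^ L) x = x" by auto
      then have "card (perm_orbit p x) dvd L" using fix_iff card_orbit by simp
      then have "perm_orbit p x \<in> A" unfolding A_def Orbs_def using x by simp
      then show "x \<in> \<Union>A" using self_orbit by blast
    qed
    show "\<Union> A \<subseteq> {x \<in> S. (p ^^ L) x = x}"
    proof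
      fix y assume "y \<in> \<Union>A"
      then obtain x where x: "x \<in> S" "y \<in> perm_orbit p x" "card (perm_orbit p x) dvd L"
        unfolding A_def Orbs_def by auto
      have "y \<in> S" using orbit_sub x(1,2) by blast
      moreover have "per p y dvd L" using x(3) card_orbit per_orbit[OF x(2)] by simp
      ultimately show "y \<in> {x \<in> S. (p ^^ L) x = x}" using fix_iff by simp
    qed
  qed
  have disj: "pairwise disjnt A"
    unfolding pairwise_def disjnt_def A_def Orbs_def
    using orbit_same by (smt (verit, ccfv_threshold) disjoint_iff imageE mem_Collect_eq)
  have finO: "\<And>Ob. Ob \<in> A \<Longrightarrow> finite Ob" unfolding A_def Orbs_def
    using orbit_sub fS finite_subset by blast
  have "card {x\<in>S. (p^^L) x = x} = (\<Sum>Ob\<in>A. card Ob)"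
    unfolding setA using card_Union_disjoint[OF disj finO] by simp
  also have "\<dots> = (\<Sum>d\<in>card ` A. (\<Sum>Ob\<in>{Ob\<in>A. card Ob = d}. card Ob))"
    using sum.image_gen[OF fA, of card card] by simp
  also have "\<dots> = (\<Sum>d\<in>card ` A. d * card {Ob\<in>A. card Ob = d})"
    by (intro sum.cong refl) simp
  also have "\<dots> = (\<Sum>d\<in>{d. d dvd L}. d * card {Ob\<in>A. card Ob = d})"
  proof (rule sum.mono_neutral_left)
    show "finite {d. d dvd L}" using assms by simp
    show "card ` A \<subseteq> {d. d dvd L}" unfolding A_def by auto
    show "\<forall>i\<in>{d. d dvd L} - card ` A. i * card {Ob \<in> A. card Ob = i} = 0"
      by (auto simp: card_eq_0_iff)
  qed
  also have "\<dots> = (\<Sum>d\<in>{d. d dvd L}. d * card {Ob \<in> perm_orbit p ` S. card Ob = d})"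
    unfolding A_def Orbs_def by (intro sum.cong refl) (metis (mono_tags, lifting) mem_Collect_eq)
  finally show ?thesis .
qed

end

lemma count_image_mset_set:
  assumes "finite A"
  shows "count (image_mset f (mset_set A)) y = card {x\<in>A. f x = y}"
  using assms
proof (induction A rule: finite_induct)
  case (insert a A)
  have "{x \<in> insert a A. f x = y} = (if f a = y then insert a {x \<in> A. f x = y} else {x \<in> A. f x = y})"
    by auto
  then show ?case using insert by auto
qed simp

lemma fix_count_lam:
  assumes "p permutes {1..n}" "cycle_type p {1..n} = lam" "0 < L"
  shows "card {x\<in>{1..n}. (p^^L) x = x} = (\<Sum>d\<in>{d. d dvd L}. d * count lam d)"
proof -
  have "count lam d = card {Ob \<in> perm_orbit p ` {1..n}. card Ob = d}" for d
    using assms(2) unfolding cycle_type_def by (metis count_image_mset_set finite_imageI finite_atLeastAtMost)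
  then show ?thesis using fix_count[OF assms(1) _ assms(3)] by simp
qed




locale ppl =
  fixes I J :: "nat list"
  assumes pp: "partial_perm I J"
begin

definition fI :: "nat \<Rightarrow> nat" where "fI v = the (map_of (zip I J) v)"
definition bJ :: "nat \<Rightarrow> nat" where "bJ w = the (map_of (zip J I) w)"
definition V :: "nat set" where "V = set I \<union> set J"

lemma len: "length I = length J" and dI: "distinct I" and dJ: "distinct J"
  using pp unfolding partial_perm_def by auto

lemma f_nth: "l < length I \<Longrightarrow> fI (I!l) = J!l"
  unfolding fI_def using map_of_zip_nth[OF len dI] len by simp

lemma b_nth: "l < length J \<Longrightarrow> bJ (J!l) = I!l"
  unfolding bJ_def using map_of_zip_nth[OF len[symmetric] dJ] len by simp

lemma obtI: assumes "u \<in> set I" obtains l where "l < length I" "u = I!l"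
  using assms by (auto simp: in_set_conv_nth)

lemma obtJ: assumes "w \<in> set J" obtains l where "l < length I" "w = J!l"
  using assms len by (auto simp: in_set_conv_nth)

lemma f_in: "u \<in> set I \<Longrightarrow> fI u \<in> set J"
  by (erule obtI) (simp add: f_nth len)

lemma b_in: "w \<in> set J \<Longrightarrow> bJ w \<in> set I"
  by (erule obtJ) (simp add: b_nth len)

lemma bf: "u \<in> set I \<Longrightarrow> bJ (fI u) = u"
  by (erule obtI) (simp add: f_nth b_nth len)

lemma fb: "w \<in> set J \<Longrightarrow> fI (bJ w) = w"
  by (erule obtJ) (simp add: f_nth b_nth len)

lemma finV: "finite V" unfolding V_def by simp

lemma fpow_bpow:
  assumes "\<And>a. a < c + i \<Longrightarrow> (bJ^^a) w \<in> set J"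
  shows "(fI^^i) ((bJ^^(c+i)) w) = (bJ^^c) w"
  using assms
proof (induction i arbitrary: c)
  case 0 then show ?case by simp
next
  case (Suc i)
  have "(fI^^i) ((bJ^^(Suc c + i)) w) = (bJ^^(Suc c)) w"
    using Suc.IH[of "Suc c"] Suc.prems by simp
  moreover have "(bJ^^c) w \<in> set J" using Suc.prems by simp
  ultimately show ?case by (simp add: fb)
qed

lemma exists_exit:
  assumes "t \<notin> set I"
  shows "\<exists>n. (bJ^^n) t \<notin> set J"
proof (rule ccontr)
  assume "\<not> ?thesis"
  then have allJ: "\<And>a. (bJ^^a) t \<in> set J" by blast
  have "range (\<lambda>a. (bJ^^a) t) \<subseteq> set J" using allJ by auto
  then have "finite (range (\<lambda>a. (bJ^^a) t))" using finite_subset by blast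
  then have "\<not> inj (\<lambda>a. (bJ^^a) t)" using finite_imageD infinite_UNIV_nat by blast
  then obtain i j where ij: "(bJ^^i) t = (bJ^^j) t" "i \<noteq> j" unfolding inj_def by blast
  have key: "(bJ^^i) t = (bJ^^j) t \<Longrightarrow> i < j \<Longrightarrow> False" for i j
  proof -
    assume e: "(bJ^^i) t = (bJ^^j) t" and lt: "i < j"
    have "t = (fI^^i) ((bJ^^(0+i)) t)" using fpow_bpow[of 0 i t] allJ by simp
    also have "\<dots> = (fI^^i) ((bJ^^((j-i)+i)) t)" using e lt by simp
    also have "\<dots> = (bJ^^(j-i)) t" using fpow_bpow[of "j-i" i t] allJ by blast
    also have "\<dots> = (bJ^^(Suc (j-i-1))) t" using lt by (simp add: Suc_diff_Suc)
    also have "\<dots> = bJ ((bJ^^(j-i-1)) t)" by simp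
    finally have "t = bJ ((bJ^^(j-i-1)) t)" .
    then have "t \<in> set I" using b_in[OF allJ[of "j-i-1"]] by simp
    then show False using assms by simp
  qed
  show False
  proof (cases "i < j")
    case True then show False using key ij by blast
  next
    case False then have "j < i" using ij by linarith
    then show False using key ij by metis
  qed
qed

definition hn :: "nat \<Rightarrow> nat" where "hn t = (LEAST n. (bJ^^n) t \<notin> set J)"
definition head :: "nat \<Rightarrow> nat" where "head t = (bJ^^(hn t)) t"

lemma head_notJ: "t \<notin> set I \<Longrightarrow> head t \<notin> set J"
proof -
  assume "t \<notin> set I"
  then obtain n where "(bJ^^n) t \<notin> set J" using exists_exit by blast
  then show ?thesis unfolding head_def hn_def by (rule LeastI)
qed

lemma before_head: "t \<notin> set I \<Longrightarrow> a < hn t \<Longrightarrow> (bJ^^a) t \<in> set J"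
  unfolding hn_def using not_less_Least by blast

lemma fpow_head:
  assumes "t \<notin> set I" "i \<le> hn t"
  shows "(fI^^i) (head t) = (bJ^^(hn t - i)) t"
proof -
  have "(fI^^i) ((bJ^^((hn t - i)+i)) t) = (bJ^^(hn t - i)) t"
    by (rule fpow_bpow) (use assms before_head in simp)
  then show ?thesis using assms unfolding head_def by simp
qed

lemma fpow_head_t: "t \<notin> set I \<Longrightarrow> (fI^^(hn t)) (head t) = t"
  using fpow_head[of t "hn t"] by simp

lemma fpow_head_I:
  assumes "t \<notin> set I" "i < hn t"
  shows "(fI^^i) (head t) \<in> set I"
proof -
  have "Suc (hn t - i - 1) = hn t - i" using assms(2) by linarith
  then have "(fI^^i) (head t) = (bJ^^(Suc (hn t - i - 1))) t" using fpow_head[of t i] assms by simp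
  also have "\<dots> = bJ ((bJ^^(hn t - i - 1)) t)" by simp
  finally show ?thesis using b_in before_head[OF assms(1), of "hn t - i - 1"] assms(2) by simp
qed

lemma head_V: "t \<in> V \<Longrightarrow> t \<notin> set I \<Longrightarrow> head t \<in> V"
proof (cases "hn t")
  case 0 assume "t \<in> V" then show ?thesis using 0 unfolding head_def by simp
next
  case (Suc a) assume "t \<notin> set I"
  then have "(bJ^^a) t \<in> set J" using before_head Suc by simp
  then show ?thesis unfolding head_def V_def using Suc b_in by simp
qed

definition g :: "nat \<Rightarrow> nat" where
  "g u = (if u \<in> set I then fI u else if u \<in> V then head u else u)"

lemma g_inj: "inj_on g V"
proof (rule inj_onI)
  fix u1 u2 assume u: "u1 \<in> V" "u2 \<in> V" "g u1 = g u2"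
  show "u1 = u2"
  proof (cases "u1 \<in> set I"; cases "u2 \<in> set I")
    assume "u1 \<in> set I" "u2 \<in> set I"
    then show ?thesis using u bf unfolding g_def by metis
  next
    assume "u1 \<in> set I" "u2 \<notin> set I"
    then show ?thesis using u f_in head_notJ unfolding g_def by metis
  next
    assume "u1 \<notin> set I" "u2 \<in> set I"
    then show ?thesis using u f_in head_notJ unfolding g_def by metis
  next
    assume n: "u1 \<notin> set I" "u2 \<notin> set I"
    then have h: "head u1 = head u2" using u unfolding g_def by simp
    have "hn u1 = hn u2"
    proof (rule ccontr)
      assume "hn u1 \<noteq> hn u2"
      then consider "hn u1 < hn u2" | "hn u2 < hn u1" by linarith
      then show False
      proof cases
        case 1
        then have "(fI^^(hn u1)) (head u2) \<in> set I" using fpow_head_I n by blast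
        then show False using h fpow_head_t n by metis
      next
        case 2
        then have "(fI^^(hn u2)) (head u1) \<in> set I" using fpow_head_I n by blast
        then show False using h fpow_head_t n by metis
      qed
    qed
    then show ?thesis using h fpow_head_t n by metis
  qed
qed

lemma g_V: "u \<in> V \<Longrightarrow> g u \<in> V"
  unfolding g_def using f_in head_V by (auto simp: V_def)

lemma g_perm: "g permutes V"
proof (rule bij_imp_permutes)
  show "bij_betw g V V" unfolding bij_betw_def
    using endo_inj_surj[OF finV _ g_inj] g_V g_inj by blast
  show "\<And>x. x \<notin> V \<Longrightarrow> g x = x" unfolding g_def V_def by auto
qed

lemma gpow_tail:
  assumes "t \<in> V" "t \<notin> set I" "i \<le> hn t"
  shows "(g^^(Suc i)) t = (fI^^i) (head t)"
  using assms(3)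
proof (induction i)
  case 0 then show ?case using assms unfolding g_def by simp
next
  case (Suc i)
  have "(g^^(Suc (Suc i))) t = g ((fI^^i) (head t))" using Suc by simp
  also have "\<dots> = fI ((fI^^i) (head t))" using fpow_head_I[OF assms(2), of i] Suc.prems
    unfolding g_def by simp
  finally show ?case by simp
qed

lemma tail_orbit:
  assumes "t \<in> V" "t \<notin> set I"
  shows "perm_orbit g t - {t} \<subseteq> set I"
proof
  fix z assume z: "z \<in> perm_orbit g t - {t}"
  have per: "(g^^(Suc (hn t))) t = t" using gpow_tail[OF assms, of "hn t"] fpow_head_t assms by simp
  have "perm_orbit g t = (\<lambda>j. (g^^j) t) ` {..<Suc (hn t)}"
    unfolding perm_orbit_def using period_range[OF per] by simp
  then obtain j where j: "j < Suc (hn t)" "z = (g^^j) t" using z by auto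
  then obtain i where i: "j = Suc i" using z by (cases j) auto
  then show "z \<in> set I" using j gpow_tail[OF assms, of i] fpow_head_I[OF assms(2), of i] z
    fpow_head_t[OF assms(2)] by (cases "i = hn t") auto
qed

end



context ppl begin

lemmas orb_same = orbit_same[OF g_perm finV]
lemmas orb_sub = orbit_sub[OF g_perm finV]
lemmas orb_self = self_orbit[OF g_perm finV]
lemmas card_orb = card_orbit[OF g_perm finV]
lemmas orb_img = orbit_img[OF g_perm finV]
lemmas perg = per_p[OF g_perm finV]

definition R :: "(nat \<times> nat) set" where
  "R = (pp_edges I J \<union> (pp_edges I J)\<inverse>)\<^sup>*"

lemma E_char: "(u,w) \<in> pp_edges I J \<longleftrightarrow> u \<in> set I \<and> w = fI u"
proof
  assume "(u,w) \<in> pp_edges I J"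
  then obtain l where "I!l = u" "J!l = w" "l < length I" unfolding pp_edges_def in_set_zip by auto
  then show "u \<in> set I \<and> w = fI u" using f_nth by auto
next
  assume h: "u \<in> set I \<and> w = fI u"
  then obtain l where l: "l < length I" "u = I!l" using obtI by blast
  then have "w = J!l" using h f_nth by simp
  then show "(u,w) \<in> pp_edges I J" unfolding pp_edges_def in_set_zip using l len by auto
qed

lemma g_I: "u \<in> set I \<Longrightarrow> g u = fI u" unfolding g_def by simp

lemma g_in_orbit: "g u \<in> perm_orbit g u"
proof -
  have "g u = (g^^1) u" by simp
  then show ?thesis unfolding perm_orbit_def by blast
qed

lemma R_sub: "(v, w) \<in> R \<Longrightarrow> w \<in> perm_orbit g v"
  unfolding R_def
proof (induction rule: rtrancl_induct)
  case base then show ?case by (rule orb_self)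
next
  case (step y z)
  from step.hyps(2) consider "(y,z) \<in> pp_edges I J" | "(z,y) \<in> pp_edges I J" by blast
  then show ?case
  proof cases
    case 1
    then have "z = g y" using E_char g_I by simp
    then have "z \<in> perm_orbit g y" using g_in_orbit by simp
    then show ?thesis using orb_same[OF step.IH] by simp
  next
    case 2
    then have "y = g z" using E_char g_I by simp
    then have "y \<in> perm_orbit g z" using g_in_orbit by simp
    then have "perm_orbit g y = perm_orbit g z" by (rule orb_same)
    moreover have "perm_orbit g y = perm_orbit g v" using orb_same[OF step.IH] .
    ultimately show ?thesis using orb_self[of z] by simp
  qed
qed

lemma step_R:
  assumes "u \<in> V" shows "(u, g u) \<in> R"
proof (cases "u \<in> set I")
  case True
  then have "(u, g u) \<in> pp_edges I J" using E_char g_I by simp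
  then show ?thesis unfolding R_def by blast
next
  case False
  have chain: "i \<le> hn u \<Longrightarrow> (head u, (fI^^i) (head u)) \<in> (pp_edges I J)\<^sup>*" for i
  proof (induction i)
    case 0 then show ?case by simp
  next
    case (Suc i)
    then have "(fI^^i) (head u) \<in> set I" using fpow_head_I[OF False] by simp
    then have "((fI^^i) (head u), (fI^^(Suc i)) (head u)) \<in> pp_edges I J" using E_char by simp
    with Suc show ?case by (meson Suc_leD rtrancl.rtrancl_into_rtrancl)
  qed
  have "(head u, u) \<in> (pp_edges I J)\<^sup>*" using chain[of "hn u"] fpow_head_t[OF False] by simp
  then have "(u, head u) \<in> ((pp_edges I J)\<inverse>)\<^sup>*" by (rule rtrancl_converseI)
  then have "(u, head u) \<in> R" unfolding R_def
    by (rule rev_subsetD) (rule rtrancl_mono, blast)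
  moreover have "g u = head u" using False assms unfolding g_def by simp
  ultimately show ?thesis by simp
qed

lemma orbit_R:
  assumes "v \<in> V" "w \<in> perm_orbit g v" shows "(v, w) \<in> R"
proof -
  obtain j where j: "w = (g^^j) v" using assms(2) unfolding perm_orbit_def by auto
  have "(v, (g^^j) v) \<in> R" for j
  proof (induction j)
    case 0 then show ?case unfolding R_def by simp
  next
    case (Suc j)
    have "(g^^j) v \<in> V" using permutes_funpow_in[OF g_perm assms(1)] .
    then have "((g^^j) v, g ((g^^j) v)) \<in> R" by (rule step_R)
    with Suc show ?case unfolding R_def by simp
  qed
  then show ?thesis using j by simp
qed

lemma comp_eq: "v \<in> V \<Longrightarrow> R `` {v} = perm_orbit g v"
  using R_sub orbit_R by blast

lemma comps: "pp_components I J = perm_orbit g ` V"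
proof -
  have "pp_components I J = (\<lambda>v. R `` {v}) ` V" unfolding pp_components_def R_def V_def by simp
  also have "\<dots> = perm_orbit g ` V" using comp_eq by (intro image_cong refl) simp
  finally show ?thesis .
qed

lemma comp_edges_eq: "comp_edges I J C = card (C \<inter> set I)"
proof -
  have "inj_on (nth I) {l. l < length I \<and> I!l \<in> C}" by (rule inj_on_nth[OF dI]) simp
  moreover have "nth I ` {l. l < length I \<and> I!l \<in> C} = C \<inter> set I"
    by (auto simp: in_set_conv_nth)
  ultimately show ?thesis unfolding comp_edges_def by (metis card_image)
qed


definition Good :: "(nat \<Rightarrow> nat) \<Rightarrow> nat \<Rightarrow> nat set \<Rightarrow> nat set \<Rightarrow> (nat \<Rightarrow> nat) set" where
  "Good p n C U = {\<phi> \<in> C \<rightarrow>\<^sub>E {1..n}. \<forall>u\<in>U. p (\<phi> u) = \<phi> (g u)}"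

lemma chain_count:
  assumes pn: "p permutes {1..n}"
    and C: "C = perm_orbit g x" and L: "L = per g x"
    and Ulo: "\<And>j. j < L - 1 \<Longrightarrow> (g^^j) x \<in> U" and Uhi: "U \<subseteq> C"
  shows "card (Good p n C U) = card {y \<in> {1..n}. ((g^^(L-1)) x \<in> U \<longrightarrow> (p^^L) y = y)}"
proof -
  define h where "h j = (g^^j) x" for j
  have L0: "0 < L" using perg(1) L by simp
  have hL: "h L = x" unfolding h_def L using perg(2) by simp
  have hS: "h (Suc j) = g (h j)" for j unfolding h_def by simp
  have inj: "inj_on h {..<L}" unfolding h_def L
    using period_inj[OF perg(2) perg(1) perg(3)] by simp
  have img: "C = h ` {..<L}" unfolding h_def C L using orb_img by simp
  define idx where "idx = inv_into {..<L} h"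
  have idx_h: "j < L \<Longrightarrow> idx (h j) = j" for j unfolding idx_def using inj by simp
  have h_idx: "v \<in> C \<Longrightarrow> idx v < L \<and> h (idx v) = v" for v
  proof -
    assume "v \<in> C"
    then have "v \<in> h ` {..<L}" using img by simp
    then show ?thesis unfolding idx_def using inv_into_into[of v h "{..<L}"] f_inv_into_f[of v h "{..<L}"]
      by simp
  qed
  have h_C: "j < L \<Longrightarrow> h j \<in> C" for j using img by simp
  define \<Phi> where "\<Phi> y = (\<lambda>v. if v \<in> C then (p^^(idx v)) y else undefined)" for y
  define T where "T = {y \<in> {1..n}. ((g^^(L-1)) x \<in> U \<longrightarrow> (p^^L) y = y)}"
  have hLm: "g (h (L - 1)) = x" using hS[of "L-1"] hL L0 by simp
  have sub1: "Good p n C U \<subseteq> \<Phi> ` T"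
  proof
    fix \<phi> assume ph: "\<phi> \<in> Good p n C U"
    then have phE: "\<phi> \<in> C \<rightarrow>\<^sub>E {1..n}" and phU: "\<And>u. u \<in> U \<Longrightarrow> p (\<phi> u) = \<phi> (g u)"
      unfolding Good_def by auto
    have val: "j < L \<Longrightarrow> \<phi> (h j) = (p^^j) (\<phi> x)" for j
    proof (induction j)
      case 0 then show ?case unfolding h_def by simp
    next
      case (Suc j)
      then have "h j \<in> U" using Ulo[of j] unfolding h_def by simp
      then have "\<phi> (h (Suc j)) = p (\<phi> (h j))" using phU hS by simp
      then show ?case using Suc by simp
    qed
    have eq: "\<phi> = \<Phi> (\<phi> x)"
    proof
      fix v show "\<phi> v = \<Phi> (\<phi> x) v"
      proof (cases "v \<in> C")
        case True
        then show ?thesis unfolding \<Phi>_def using val[of "idx v"] h_idx[OF True] by simp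
      next
        case False
        then show ?thesis unfolding \<Phi>_def using phE by (simp add: PiE_def extensional_def)
      qed
    qed
    have xC: "x \<in> C" using h_C[OF L0] unfolding h_def by simp
    have "\<phi> x \<in> {1..n}" using phE xC by auto
    moreover have "(p^^L) (\<phi> x) = \<phi> x" if "(g^^(L-1)) x \<in> U"
    proof -
      have "p (\<phi> (h (L-1))) = \<phi> (g (h (L-1)))" using phU that unfolding h_def by simp
      then have "p ((p^^(L-1)) (\<phi> x)) = \<phi> x" using val[of "L-1"] L0 hLm by simp
      moreover have "p ((p^^(L-1)) (\<phi> x)) = (p^^L) (\<phi> x)"
        using L0 by (metis Suc_diff_1 comp_apply funpow.simps(2))
      ultimately show ?thesis by simp
    qed
    ultimately have "\<phi> x \<in> T" unfolding T_def by simp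
    then show "\<phi> \<in> \<Phi> ` T" using eq by blast
  qed
  have sub2: "\<Phi> ` T \<subseteq> Good p n C U"
  proof
    fix \<psi> assume "\<psi> \<in> \<Phi> ` T"
    then obtain y where y: "y \<in> T" "\<psi> = \<Phi> y" by blast
    have yn: "y \<in> {1..n}" using y unfolding T_def by simp
    have "\<psi> \<in> C \<rightarrow>\<^sub>E {1..n}"
      unfolding y(2) \<Phi>_def using permutes_funpow_in[OF pn yn] by auto
    moreover have "p (\<psi> u) = \<psi> (g u)" if u: "u \<in> U" for u
    proof -
      have uC: "u \<in> C" using u Uhi by blast
      define j where "j = idx u"
      have j: "j < L" "h j = u" using h_idx[OF uC] unfolding j_def by auto
      have gu: "g u = h (Suc j)" using j hS by simp
      have gC: "g u \<in> C" unfolding C using g_in_orbit orb_same uC C by blast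
      show ?thesis
      proof (cases "Suc j < L")
        case True
        then have "idx (g u) = Suc j" using gu idx_h by simp
        then show ?thesis unfolding y(2) \<Phi>_def using uC gC j_def by simp
      next
        case False
        then have jL: "j = L - 1" using j by simp
        then have "g u = x" using gu hL L0 by simp
        moreover have "idx x = 0" using idx_h[OF L0] unfolding h_def by simp
        moreover have "(p^^L) y = y" using y(1) u j jL unfolding T_def h_def by simp
        moreover have "p ((p^^(L-1)) y) = (p^^L) y"
          using L0 by (metis Suc_diff_1 comp_apply funpow.simps(2))
        ultimately show ?thesis unfolding y(2) \<Phi>_def using uC gC j_def jL by simp
      qed
    qed
    ultimately show "\<psi> \<in> Good p n C U" unfolding Good_def by blast
  qed
  have injP: "inj_on \<Phi> T"
  proof (rule inj_onI)
    fix y1 y2 assume "y1 \<in> T" "y2 \<in> T" "\<Phi> y1 = \<Phi> y2"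
    then have "\<Phi> y1 x = \<Phi> y2 x" by simp
    moreover have "x \<in> C" "idx x = 0" using h_C[OF L0] idx_h[OF L0] unfolding h_def by auto
    ultimately show "y1 = y2" unfolding \<Phi>_def by simp
  qed
  have "Good p n C U = \<Phi> ` T" using sub1 sub2 by blast
  then have "card (Good p n C U) = card T" using card_image[OF injP] by simp
  then show ?thesis unfolding T_def .
qed


lemma orb_in_g: "u \<in> C \<Longrightarrow> C = perm_orbit g x \<Longrightarrow> g u \<in> C"
  using g_in_orbit orb_same by blast

lemma cyc_count:
  assumes pn: "p permutes {1..n}" and C: "C = perm_orbit g x" and CI: "C \<subseteq> set I"
  shows "card (Good p n C (C \<inter> set I)) = card {y \<in> {1..n}. (p^^(card C)) y = y}"
proof -
  have "C \<inter> set I = C" using CI by blast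
  moreover have "(g^^j) x \<in> C" for j unfolding C perm_orbit_def by blast
  ultimately have "card (Good p n C (C \<inter> set I)) = card {y \<in> {1..n}. ((g^^(per g x - 1)) x \<in> C \<longrightarrow> (p^^(per g x)) y = y)}"
    using chain_count[OF pn C refl, of "C \<inter> set I"] by simp
  also have "\<dots> = card {y \<in> {1..n}. (p^^(card C)) y = y}"
    using \<open>\<And>j. (g^^j) x \<in> C\<close> card_orb[of x] C by simp
  finally show ?thesis .
qed

lemma path_count:
  assumes pn: "p permutes {1..n}" and xV: "x \<in> V" and C: "C = perm_orbit g x" and CI: "\<not> C \<subseteq> set I"
  shows "card (Good p n C (C \<inter> set I)) = n"
proof -
  obtain t where t: "t \<in> C" "t \<notin> set I" using CI by blast
  have tV: "t \<in> V" using orb_sub[OF xV] t C by blast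
  have Ct: "C = perm_orbit g t" using orb_same t C by simp
  define x' where "x' = g t"
  have Cx: "C = perm_orbit g x'" using orb_same[of x' t] g_in_orbit[of t] Ct x'_def by simp
  define L where "L = per g x'"
  have L0: "0 < L" using perg(1) L_def by simp
  have "g ((g^^(L-1)) x') = (g^^L) x'" using L0 by (metis Suc_diff_1 comp_apply funpow.simps(2))
  also have "\<dots> = g t" using perg(2) L_def x'_def by simp
  finally have tL: "(g^^(L-1)) x' = t" using permutes_inj[OF g_perm] by (simp add: inj_eq)
  have U: "C \<inter> set I = C - {t}" using tail_orbit[OF tV t(2)] Ct t by blast
  have inj: "inj_on (\<lambda>j. (g^^j) x') {..<L}" unfolding L_def
    using period_inj[OF perg(2) perg(1) perg(3)] by simp
  have Ulo: "(g^^j) x' \<in> C \<inter> set I" if j: "j < L - 1" for j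
  proof -
    have "(g^^j) x' \<in> C" unfolding Cx perm_orbit_def by blast
    moreover have "(g^^j) x' \<noteq> t"
    proof
      assume "(g^^j) x' = t"
      then have "(g^^j) x' = (g^^(L-1)) x'" using tL by simp
      then have "j = L - 1" using inj j by (auto dest: inj_onD)
      then show False using j by simp
    qed
    ultimately show ?thesis using U by blast
  qed
  have "card (Good p n C (C \<inter> set I)) = card {y \<in> {1..n}. ((g^^(L-1)) x' \<in> C \<inter> set I \<longrightarrow> (p^^L) y = y)}"
    by (rule chain_count[OF pn Cx L_def Ulo]) auto
  also have "\<dots> = card {1..n}" using tL t by (intro arg_cong[where f=card]) auto
  finally show ?thesis by simp
qed

lemma compat_set:
  assumes "packed I J m"
  shows "num_compatible I J m p n = card {\<psi> \<in> V \<rightarrow>\<^sub>E {1..n}. \<forall>u\<in>set I. p (\<psi> u) = \<psi> (g u)}"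
proof -
  have Vm: "V = {1..m}" using assms unfolding packed_def V_def by simp
  have "(\<forall>l < length I. p (\<psi> (I ! l)) = \<psi> (J ! l)) \<longleftrightarrow> (\<forall>u\<in>set I. p (\<psi> u) = \<psi> (g u))" for \<psi>
  proof
    assume h: "\<forall>l < length I. p (\<psi> (I ! l)) = \<psi> (J ! l)"
    show "\<forall>u\<in>set I. p (\<psi> u) = \<psi> (g u)"
    proof
      fix u assume "u \<in> set I"
      then obtain l where "l < length I" "u = I!l" using obtI by blast
      then show "p (\<psi> u) = \<psi> (g u)" using h f_nth g_I by simp
    qed
  next
    assume h: "\<forall>u\<in>set I. p (\<psi> u) = \<psi> (g u)"
    show "\<forall>l < length I. p (\<psi> (I ! l)) = \<psi> (J ! l)"
      using h f_nth g_I by simp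
  qed
  then show ?thesis unfolding num_compatible_def Vm by simp
qed

lemma prod_decomp:
  shows "card {\<psi> \<in> V \<rightarrow>\<^sub>E {1..n}. \<forall>u\<in>set I. p (\<psi> u) = \<psi> (g u)}
     = (\<Prod>C\<in>perm_orbit g ` V. card (Good p n C (C \<inter> set I)))"
proof -
  define Orbs where "Orbs = perm_orbit g ` V"
  define Cs where "Cs = {\<psi> \<in> V \<rightarrow>\<^sub>E {1..n}. \<forall>u\<in>set I. p (\<psi> u) = \<psi> (g u)}"
  define F where "F \<psi> = (\<lambda>C\<in>Orbs. restrict \<psi> C)" for \<psi> :: "nat \<Rightarrow> nat"
  have fO: "finite Orbs" unfolding Orbs_def using finV by simp
  have OV: "C \<in> Orbs \<Longrightarrow> C \<subseteq> V" for C unfolding Orbs_def using orb_sub by blast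
  have vO: "v \<in> V \<Longrightarrow> perm_orbit g v \<in> Orbs" for v unfolding Orbs_def by simp
  have Ov: "C \<in> Orbs \<Longrightarrow> v \<in> C \<Longrightarrow> perm_orbit g v = C" for C v
    unfolding Orbs_def using orb_same by blast
  have Og: "C \<in> Orbs \<Longrightarrow> u \<in> C \<Longrightarrow> g u \<in> C" for C u
    unfolding Orbs_def using orb_in_g by blast
  have inj: "inj_on F Cs"
  proof (rule inj_onI)
    fix \<psi>1 \<psi>2 assume h: "\<psi>1 \<in> Cs" "\<psi>2 \<in> Cs" "F \<psi>1 = F \<psi>2"
    show "\<psi>1 = \<psi>2"
    proof
      fix v show "\<psi>1 v = \<psi>2 v"
      proof (cases "v \<in> V")
        case True
        have "F \<psi>1 (perm_orbit g v) v = F \<psi>2 (perm_orbit g v) v" using h by simp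
        then show ?thesis unfolding F_def using vO[OF True] orb_self[of v] by simp
      next
        case False then show ?thesis using h unfolding Cs_def by (auto simp: PiE_def extensional_def)
      qed
    qed
  qed
  have img: "F ` Cs = (\<Pi>\<^sub>E C\<in>Orbs. Good p n C (C \<inter> set I))"
  proof
    show "F ` Cs \<subseteq> (\<Pi>\<^sub>E C\<in>Orbs. Good p n C (C \<inter> set I))"
    proof
      fix \<Psi> assume "\<Psi> \<in> F ` Cs"
      then obtain \<psi> where \<psi>: "\<psi> \<in> Cs" "\<Psi> = F \<psi>" by blast
      have "restrict \<psi> C \<in> Good p n C (C \<inter> set I)" if C: "C \<in> Orbs" for C
        unfolding Good_def using \<psi>(1) OV[OF C] Og[OF C] unfolding Cs_def by (auto simp: PiE_def Pi_def)
      then show "\<Psi> \<in> (\<Pi>\<^sub>E C\<in>Orbs. Good p n C (C \<inter> set I))" unfolding \<psi>(2) F_def by auto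
    qed
    show "(\<Pi>\<^sub>E C\<in>Orbs. Good p n C (C \<inter> set I)) \<subseteq> F ` Cs"
    proof
      fix \<Phi> assume \<Phi>: "\<Phi> \<in> (\<Pi>\<^sub>E C\<in>Orbs. Good p n C (C \<inter> set I))"
      define \<psi> where "\<psi> v = (if v \<in> V then \<Phi> (perm_orbit g v) v else undefined)" for v
      have \<Phi>G: "C \<in> Orbs \<Longrightarrow> \<Phi> C \<in> Good p n C (C \<inter> set I)" for C using \<Phi> by auto
      have \<psi>C: "\<psi> \<in> Cs"
      proof -
        have "\<psi> v \<in> {1..n}" if v: "v \<in> V" for v
          using \<Phi>G[OF vO[OF v]] orb_self[of v] v unfolding Good_def \<psi>_def by auto
        moreover have "\<psi> v = undefined" if "v \<notin> V" for v using that \<psi>_def by simp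
        moreover have "p (\<psi> u) = \<psi> (g u)" if u: "u \<in> set I" for u
        proof -
          have uV: "u \<in> V" using u V_def by simp
          let ?C = "perm_orbit g u"
          have gC: "g u \<in> ?C" by (rule g_in_orbit)
          have gV: "g u \<in> V" using g_V uV by simp
          have "perm_orbit g (g u) = ?C" using orb_same[OF gC] .
          then show ?thesis using \<Phi>G[OF vO[OF uV]] orb_self[of u] u uV gV
            unfolding \<psi>_def Good_def by auto
        qed
        ultimately show ?thesis unfolding Cs_def by (auto simp: PiE_def extensional_def)
      qed
      have "F \<psi> = \<Phi>"
      proof
        fix C show "F \<psi> C = \<Phi> C"
        proof (cases "C \<in> Orbs")
          case True
          show ?thesis
          proof
            fix v show "F \<psi> C v = \<Phi> C v"
            proof (cases "v \<in> C")
              case True2: True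
              then show ?thesis unfolding F_def \<psi>_def using True OV[OF True] Ov[OF True True2] by auto
            next
              case False
              have "\<Phi> C \<in> C \<rightarrow>\<^sub>E {1..n}" using \<Phi>G[OF True] unfolding Good_def by simp
              then have "\<Phi> C v = undefined" using False by (simp add: PiE_def extensional_def)
              then show ?thesis unfolding F_def using True False by simp
            qed
          qed
        next
          case False
          then show ?thesis unfolding F_def using \<Phi> by (simp add: PiE_def extensional_def)
        qed
      qed
      then show "\<Phi> \<in> F ` Cs" using \<psi>C by blast
    qed
  qed
  have "card Cs = card (F ` Cs)" using card_image[OF inj] by simp
  also have "\<dots> = (\<Prod>C\<in>Orbs. card (Good p n C (C \<inter> set I)))" unfolding img by (rule card_PiE[OF fO])
  finally show ?thesis unfolding Cs_def Orbs_def .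
qed

end



lemma int_prod_mset: "int (prod_mset (image_mset f M)) = prod_mset (image_mset (\<lambda>x. int (f x)) M)"
  by (induction M) auto

lemma polyF_pow: "polyF k a (\<lambda>n ms. int n ^ a)"
proof (induction a)
  case 0 then show ?case using polyF_const[of k 1] by simp
next
  case (Suc a)
  have "polyF k (1 + a) (\<lambda>n ms. int n * int n ^ a)" by (rule polyF_mult[OF polyF_n Suc])
  then show ?case by simp
qed

lemma polyF_prod_mset:
  assumes "\<And>L. L \<in># M \<Longrightarrow> polyF k L (G L)"
  shows "polyF k (sum_mset M) (\<lambda>n ms. prod_mset (image_mset (\<lambda>L. G L n ms) M))"
  using assms
proof (induction M)
  case empty then show ?case using polyF_const[of k 1] by simp
next
  case (add x M)
  have "polyF k (x + sum_mset M) (\<lambda>n ms. G x n ms * prod_mset (image_mset (\<lambda>L. G L n ms) M))"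
    by (rule polyF_mult) (use add in auto)
  then show ?case by simp
qed

definition divsum :: "nat \<Rightarrow> nat \<Rightarrow> (nat \<Rightarrow> nat) \<Rightarrow> int" where
  "divsum L n ms = (\<Sum>d\<in>{d. d dvd L}. int d * int (ms d))"

lemma polyF_divsum:
  assumes "0 < L" "L \<le> k"
  shows "polyF k L (divsum L)"
proof -
  have "polyF k L (\<lambda>n ms. \<Sum>d\<in>{d. d dvd L}. int d * int (ms d))"
  proof (rule polyF_sum)
    show "finite {d. d dvd L}" using assms by simp
    fix d assume "d \<in> {d. d dvd L}"
    then have d: "1 \<le> d" "d \<le> L" using assms by (auto simp: dvd_imp_le intro: Suc_leI dvd_pos_nat)
    have "polyF k (0 + d) (\<lambda>n ms. int d * int (ms d))"
      by (rule polyF_mult[OF polyF_const polyF_m]) (use d assms in auto)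
    then show "polyF k L (\<lambda>n ms. int d * int (ms d))" using polyF_mono d by simp
  qed
  then show ?thesis unfolding divsum_def[abs_def] by simp
qed

definition Fpoly :: "nat multiset \<Rightarrow> nat multiset \<Rightarrow> nat \<Rightarrow> (nat \<Rightarrow> nat) \<Rightarrow> int" where
  "Fpoly mu nu n ms = int n ^ size nu * prod_mset (image_mset (\<lambda>L. divsum L n ms) mu)"

lemma size_le_sum: "(\<forall>x\<in>#M. 0 < x) \<Longrightarrow> size M \<le> sum_mset (M :: nat multiset)"
  by (induction M) auto

lemma mem_le_sum: "x \<in># M \<Longrightarrow> x \<le> sum_mset (M :: nat multiset)"
  by (induction M) auto

lemma polyF_Fpoly:
  assumes "is_partition mu" "is_partition nu" "sum_mset mu + sum_mset nu = k"
  shows "polyF k k (Fpoly mu nu)"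
proof -
  have "polyF k (sum_mset mu) (\<lambda>n ms. prod_mset (image_mset (\<lambda>L. divsum L n ms) mu))"
  proof (rule polyF_prod_mset)
    fix L assume L: "L \<in># mu"
    then have "0 < L" using assms(1) unfolding is_partition_def by auto
    moreover have "L \<le> k" using mem_le_sum[OF L] assms(3) by simp
    ultimately show "polyF k L (divsum L)" by (rule polyF_divsum)
  qed
  from polyF_mult[OF polyF_pow this]
  have "polyF k (size nu + sum_mset mu) (Fpoly mu nu)" unfolding Fpoly_def[abs_def] by simp
  moreover have "size nu + sum_mset mu \<le> k"
    using size_le_sum[of nu] assms unfolding is_partition_def by simp
  ultimately show ?thesis using polyF_mono by blast
qed

context ppl begin

lemma count_formula:
  assumes pk: "packed I J m" and pn: "p permutes {1..n}" and ct: "cycle_type p {1..n} = lam"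
  shows "int (num_compatible I J m p n) = Fpoly (cycle_part I J) (path_part I J) n (\<lambda>i. count lam i)"
proof -
  define Orbs where "Orbs = perm_orbit g ` V"
  define Cyc where "Cyc = {C \<in> Orbs. C \<subseteq> set I}"
  define Pth where "Pth = {C \<in> Orbs. \<not> C \<subseteq> set I}"
  define fixc where "fixc L = card {y \<in> {1..n}. (p^^L) y = y}" for L
  define cg where "cg C = card (Good p n C (C \<inter> set I))" for C
  have fO: "finite Orbs" unfolding Orbs_def using finV by simp
  have CycC: "Cyc = {C \<in> pp_components I J. is_cycle_comp I J C}"
    unfolding Cyc_def Orbs_def comps is_cycle_comp_def by simp
  have PthC: "Pth = {C \<in> pp_components I J. \<not> is_cycle_comp I J C}"
    unfolding Pth_def Orbs_def comps is_cycle_comp_def by simp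
  have "num_compatible I J m p n = (\<Prod>C\<in>Orbs. cg C)"
    unfolding compat_set[OF pk] prod_decomp Orbs_def cg_def ..
  also have "\<dots> = (\<Prod>C\<in>Cyc. cg C) * (\<Prod>C\<in>Pth. cg C)"
  proof -
    have "Orbs = Cyc \<union> Pth" "Cyc \<inter> Pth = {}" unfolding Cyc_def Pth_def by auto
    moreover have "finite Cyc" "finite Pth" using fO unfolding Cyc_def Pth_def by auto
    ultimately show ?thesis by (simp add: prod.union_disjoint)
  qed
  also have "(\<Prod>C\<in>Cyc. cg C) = (\<Prod>C\<in>Cyc. fixc (comp_edges I J C))"
  proof (rule prod.cong[OF refl])
    fix C assume "C \<in> Cyc"
    then obtain x where x: "x \<in> V" "C = perm_orbit g x" "C \<subseteq> set I" unfolding Cyc_def Orbs_def by auto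
    have "comp_edges I J C = card C" using comp_edges_eq x(3) by (simp add: Int_absorb2)
    then show "cg C = fixc (comp_edges I J C)" unfolding cg_def fixc_def using cyc_count[OF pn x(2,3)] by simp
  qed
  also have "(\<Prod>C\<in>Pth. cg C) = (\<Prod>C\<in>Pth. n)"
  proof (rule prod.cong[OF refl])
    fix C assume "C \<in> Pth"
    then obtain x where x: "x \<in> V" "C = perm_orbit g x" "\<not> C \<subseteq> set I" unfolding Pth_def Orbs_def by auto
    then show "cg C = n" unfolding cg_def using path_count[OF pn x] by simp
  qed
  finally have num: "num_compatible I J m p n = (\<Prod>C\<in>Cyc. fixc (comp_edges I J C)) * n ^ card Pth" by simp
  have pos: "0 < comp_edges I J C" if CC: "C \<in> Cyc" for C
  proof -
    from CC obtain x where x: "x \<in> V" "C = perm_orbit g x" "C \<subseteq> set I" unfolding Cyc_def Orbs_def by auto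
    have "comp_edges I J C = card C" using comp_edges_eq x(3) by (simp add: Int_absorb2)
    then show ?thesis using card_orb[of x] perg(1)[of x] x(2) by simp
  qed
  have "(\<Prod>C\<in>Cyc. fixc (comp_edges I J C)) = prod_mset (image_mset fixc (cycle_part I J))"
    unfolding cycle_part_def CycC[symmetric] prod_unfold_prod_mset by (simp add: image_mset.compositionality o_def)
  then have "int (\<Prod>C\<in>Cyc. fixc (comp_edges I J C)) = prod_mset (image_mset (\<lambda>L. int (fixc L)) (cycle_part I J))"
    by (simp add: int_prod_mset)
  also have "\<dots> = prod_mset (image_mset (\<lambda>L. divsum L n (\<lambda>i. count lam i)) (cycle_part I J))"
  proof -
    have "int (fixc L) = divsum L n (\<lambda>i. count lam i)" if LL: "L \<in># cycle_part I J" for L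
    proof -
      have "L \<in># image_mset (comp_edges I J) (mset_set Cyc)" using LL unfolding cycle_part_def CycC .
      then obtain C where C: "C \<in> Cyc" "L = comp_edges I J C"
        using fO unfolding Cyc_def by auto
      have "fixc L = (\<Sum>d\<in>{d. d dvd L}. d * count lam d)"
        unfolding fixc_def using fix_count_lam[OF pn ct] pos[OF C(1)] C(2) by simp
      then show ?thesis unfolding divsum_def by simp
    qed
    then show ?thesis by (intro arg_cong[where f=prod_mset] image_mset_cong) simp
  qed
  finally have A: "int (\<Prod>C\<in>Cyc. fixc (comp_edges I J C)) = prod_mset (image_mset (\<lambda>L. divsum L n (\<lambda>i. count lam i)) (cycle_part I J))" .
  have B: "card Pth = size (path_part I J)" unfolding path_part_def PthC[symmetric] by simp
  show ?thesis unfolding num Fpoly_def using A B by simp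
qed

end

theorem proposition3p1:
  fixes mu nu :: "nat multiset" and k :: nat
  assumes "is_partition mu" and "is_partition nu"
    and "sum_mset mu + sum_mset nu = k"
    and "\<exists>I J. partial_perm I J \<and> cycle_part I J = mu \<and> path_part I J = nu"
  shows "\<exists>P. is_poly_nm k P \<and> (\<forall>e. P e \<noteq> 0 \<longrightarrow> wdeg k e \<le> k) \<and>
           (\<forall>n lam p I J m. is_partition_of lam n \<longrightarrow> p permutes {1..n} \<longrightarrow>
              cycle_type p {1..n} = lam \<longrightarrow> packed I J m \<longrightarrow>
              cycle_part I J = mu \<longrightarrow> path_part I J = nu \<longrightarrow>
              int (num_compatible I J m p n) = eval_poly_nm k P n (\<lambda>i. count lam i))"
proof -
  obtain P where P: "is_poly_nm k P" "\<forall>e. P e \<noteq> 0 \<longrightarrow> wdeg k e \<le> k"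
    "\<And>n ms. Fpoly mu nu n ms = eval_poly_nm k P n ms"
    using polyF_Fpoly[OF assms(1-3)] unfolding polyF_def by blast
  show ?thesis
  proof (intro exI[of _ P] conjI P(1,2) allI impI)
    fix n lam p I J m
    assume h: "p permutes {1..n}" "cycle_type p {1..n} = lam" "packed I J m"
      "cycle_part I J = mu" "path_part I J = nu"
    have "ppl I J" using h(3) unfolding packed_def by unfold_locales simp
    then have "int (num_compatible I J m p n) = Fpoly (cycle_part I J) (path_part I J) n (\<lambda>i. count lam i)"
      using ppl.count_formula h(1,2,3) by blast
    then show "int (num_compatible I J m p n) = eval_poly_nm k P n (\<lambda>i. count lam i)"
      using h(4,5) P(3) by simp
  qed
qed


end
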